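(* Let $(G,H,T)$ be a loop folder such that $T$ is invariant under conjugation by $H$. Suppose $t\in T$ is such that $Ht$ is also a left coset of $H$, i.e. there is $g\in G$ with $Ht=gH$ (this holds in particular if $t$ normalizes $H$). Then $[t,H]=1$.
   Context: A loop folder is a triple $(G,H,T)$ with $G$ a finite group, $H\le G$, and $T\subseteq G$ with $1\in T$ such that $T$ is a set of representatives for the right cosets $H^g\backslash G$ for every $g\in G$. *)

theory Defs
  imports "HOL-Algebra.Algebra"
begin

definition conj_set :: "('a, 'b) monoid_scheme \<Rightarrow> 'a set \<Rightarrow> 'a \<Rightarrow> 'a set" where
  "conj_set G H g = (\<lambda>h. inv\<^bsub>G\<^esub> g \<otimes>\<^bsub>G\<^esub> h \<otimes>\<^bsub>G\<^esub> g) ` H"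

definition right_transversal :: "('a, 'b) monoid_scheme \<Rightarrow> 'a set \<Rightarrow> 'a set \<Rightarrow> bool" where
  "right_transversal G K T \<longleftrightarrow> T \<subseteq> carrier G \<and>
     (\<forall>x\<in>carrier G. \<exists>!t. t \<in> T \<and> t \<in> K #>\<^bsub>G\<^esub> x)"

definition loop_folder :: "('a, 'b) monoid_scheme \<Rightarrow> 'a set \<Rightarrow> 'a set \<Rightarrow> bool" where
  "loop_folder G H T \<longleftrightarrow> group G \<and> finite (carrier G) \<and> subgroup H G \<and>
     T \<subseteq> carrier G \<and> \<one>\<^bsub>G\<^esub> \<in> T \<and>
     (\<forall>g\<in>carrier G. right_transversal G (conj_set G H g) T)"

end

theory Submission
  imports Defs
begin

theorem lemma3p2:
  fixes G (structure)
  assumes "loop_folder G H T"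
    and "\<forall>h\<in>H. \<forall>s\<in>T. inv h \<otimes> s \<otimes> h \<in> T"
    and "t \<in> T"
    and "\<exists>g\<in>carrier G. H #> t = g <# H"
  shows "\<forall>h\<in>H. t \<otimes> h = h \<otimes> t"
proof
  fix h assume hH: "h \<in> H"
  have grp: "group G" and sub: "subgroup H G" and TG: "T \<subseteq> carrier G"
    and tr: "\<forall>g\<in>carrier G. right_transversal G (conj_set G H g) T"
    using assms(1) unfolding loop_folder_def by blast+
  interpret group G by (rule grp)
  have tG: "t \<in> carrier G" using assms(3) TG by auto
  have hG: "h \<in> carrier G" by (rule subgroup.mem_carrier[OF sub hH])
  have c1: "conj_set G H \<one> = H"
    unfolding conj_set_def
  proof -
    have "\<And>x. x \<in> H \<Longrightarrow> inv \<one> \<otimes> x \<otimes> \<one> = x" using subgroup.mem_carrier[OF sub] by simp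
    hence "(\<lambda>h. inv \<one> \<otimes> h \<otimes> \<one>) ` H = (\<lambda>h. h) ` H" by (intro image_cong) auto
    thus "(\<lambda>h. inv \<one> \<otimes> h \<otimes> \<one>) ` H = H" by (simp only: image_ident)
  qed
  have rt: "right_transversal G H T" using tr[rule_format, OF one_closed] c1 by simp
  obtain g where gG: "g \<in> carrier G" and eq: "H #> t = g <# H" using assms(4) by auto
  have "t \<in> H #> t" unfolding r_coset_def using sub subgroup.one_closed tG by force
  then obtain h0 where h0: "h0 \<in> H" "t = g \<otimes> h0" using eq unfolding l_coset_def by auto
  have h0G: "h0 \<in> carrier G" using subgroup.mem_carrier[OF sub h0(1)] .
  have "t \<otimes> h = g \<otimes> (h0 \<otimes> h)" unfolding h0(2) by (rule m_assoc[OF gG h0G hG])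
  moreover have "h0 \<otimes> h \<in> H" by (rule subgroup.m_closed[OF sub h0(1) hH])
  ultimately have "t \<otimes> h \<in> g <# H" unfolding l_coset_def by blast
  then obtain h1 where h1: "h1 \<in> H" "t \<otimes> h = h1 \<otimes> t" using eq unfolding r_coset_def by blast
  have h1G: "h1 \<in> carrier G" using subgroup.mem_carrier[OF sub h1(1)] .
  define s where "s = inv h \<otimes> t \<otimes> h"
  have sT: "s \<in> T" using assms(2) hH assms(3) unfolding s_def by blast
  have "s = inv h \<otimes> (t \<otimes> h)" unfolding s_def by (rule m_assoc[OF inv_closed[OF hG] tG hG])
  also have "\<dots> = (inv h \<otimes> h1) \<otimes> t" unfolding h1(2) by (rule m_assoc[OF inv_closed[OF hG] h1G tG, symmetric])
  finally have s_eq: "s = (inv h \<otimes> h1) \<otimes> t" .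
  have "inv h \<otimes> h1 \<in> H" by (rule subgroup.m_closed[OF sub subgroup.m_inv_closed[OF sub hH] h1(1)])
  hence sC: "s \<in> H #> t" using s_eq unfolding r_coset_def by blast
  have tC: "t \<in> H #> t" unfolding r_coset_def using sub subgroup.one_closed tG by force
  have "\<exists>!u. u \<in> T \<and> u \<in> H #> t" using rt tG unfolding right_transversal_def by blast
  hence "s = t" using sT sC tC assms(3) by blast
  hence "inv h \<otimes> t \<otimes> h = t" using s_def by (simp only:)
  hence "h \<otimes> (inv h \<otimes> t \<otimes> h) = h \<otimes> t" by simp
  moreover have "h \<otimes> (inv h \<otimes> t \<otimes> h) = t \<otimes> h"
    using hG tG by (simp add: m_assoc[symmetric])
  ultimately show "t \<otimes> h = h \<otimes> t" by simp
qed

end
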